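(* Let $\lambda>0$ and $f(z)=z+\sum_{k=2}^{\infty}a_kz^k$ analytic in $\mathbb{D}=\{z:|z|<1\}$. If $\sum_{k=2}^{\infty}(k-1)|a_k|<\lambda$, then $f\in\Omega_\lambda$. Moreover, for every $f(z)=z+\sum_{k=2}^\infty a_kz^k\in\Omega_\lambda$, $|a_k|\le\frac{\lambda}{k-1}$ for all $k\ge2$.
   Context: $\Omega_\lambda$ denotes the set of functions $f$ analytic in $\mathbb{D}$ with $f(0)=0$, $f'(0)=1$, such that $zf'(z)-f(z)=\lambda z^2\phi(z)$ for some analytic $\phi$ on $\mathbb{D}$ with $|\phi(z)|\le1$. *)

theory Defs
  imports "HOL-Complex_Analysis.Complex_Analysis"
begin

definition Omega :: "real \<Rightarrow> (complex \<Rightarrow> complex) set" where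
  "Omega lam = {f. f holomorphic_on ball 0 1 \<and> f 0 = 0 \<and> deriv f 0 = 1 \<and>
     (\<exists>\<phi>. \<phi> holomorphic_on ball 0 1 \<and> (\<forall>z\<in>ball 0 1. norm (\<phi> z) \<le> 1) \<and>
        (\<forall>z\<in>ball 0 1. z * deriv f z - f z = complex_of_real lam * z^2 * \<phi> z))}"

end

theory Submission
  imports Defs
begin

lemma coeff_le_one:
  fixes x :: real and j :: nat
  assumes "\<And>r. 0 < r \<Longrightarrow> r < 1 \<Longrightarrow> x \<le> 1 / r ^ j"
  shows "x \<le> 1"
proof -
  define r where "r = (\<lambda>n::nat. 1 - 1 / real (Suc (Suc n)))"
  have l: "(\<lambda>n. 1 / real (Suc (Suc n))) \<longlonglongrightarrow> 0"
    using LIMSEQ_Suc[OF LIMSEQ_Suc[OF lim_inverse_n']] by simp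
  have "(\<lambda>n. 1 / r n ^ j) \<longlonglongrightarrow> 1 / (1 - 0) ^ j"
    unfolding r_def by (intro tendsto_intros l) auto
  then have lim: "(\<lambda>n. 1 / r n ^ j) \<longlonglongrightarrow> 1" by simp
  have "x \<le> 1 / r n ^ j" for n
  proof (rule assms)
    have "1 / real (Suc (Suc n)) < 1" by simp
    then show "0 < r n" unfolding r_def by linarith
    have "0 < 1 / real (Suc (Suc n))" by simp
    then show "r n < 1" unfolding r_def by linarith
  qed
  then show ?thesis
    by (intro LIMSEQ_le_const[OF lim]) blast
qed

lemma part2:
  fixes lam :: real and f :: "complex \<Rightarrow> complex" and a :: "nat \<Rightarrow> complex"
  assumes lam: "lam > 0" and fO: "f \<in> Omega lam" and a0: "a 0 = 0" and a1: "a 1 = 1"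
    and s: "\<forall>z\<in>ball 0 1. (\<lambda>k. a k * z ^ k) sums f z" and k: "k \<ge> 2"
  shows "norm (a k) \<le> lam / (real k - 1)"
proof -
  from fO obtain \<phi> where hf: "f holomorphic_on ball 0 1" and hp: "\<phi> holomorphic_on ball 0 1"
    and bp: "\<forall>z\<in>ball 0 1. norm (\<phi> z) \<le> 1"
    and eq: "\<forall>z\<in>ball 0 1. z * deriv f z - f z = complex_of_real lam * z^2 * \<phi> z"
    unfolding Omega_def by blast
  define A where "A = Abs_fps a"
  have ev: "eventually (\<lambda>z. z \<in> ball (0::complex) 1) (nhds 0)"
    by (intro eventually_nhds_in_open) auto
  have fA: "f has_fps_expansion A"
    by (rule has_fps_expansionI) (use ev s in \<open>auto simp: A_def elim!: eventually_mono\<close>)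
  have gA: "(\<lambda>z. z * deriv f z - f z) has_fps_expansion (fps_X * fps_deriv A - A)"
    by (intro fps_expansion_intros fA)
  define C where "C = fps_expansion \<phi> 0"
  have pC: "\<phi> has_fps_expansion C"
    unfolding C_def by (rule has_fps_expansion_fps_expansion[OF _ _ hp]) auto
  have gC: "(\<lambda>z. complex_of_real lam * z^2 * \<phi> z) has_fps_expansion (fps_const (complex_of_real lam) * fps_X^2 * C)"
    by (intro fps_expansion_intros pC)
  have "(\<lambda>z. z * deriv f z - f z) has_fps_expansion (fps_const (complex_of_real lam) * fps_X^2 * C)"
    using gC by (subst has_fps_expansion_cong[OF _ refl]) (use ev eq in \<open>auto elim!: eventually_mono\<close>)
  with gA have E: "fps_X * fps_deriv A - A = fps_const (complex_of_real lam) * fps_X^2 * C"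
    by (rule fps_expansion_unique_complex)
  have L: "(fps_X * fps_deriv A - A) $ k = (of_nat k - 1) * a k"
  proof -
    have "(fps_X * fps_deriv A) $ k = of_nat k * a k"
      using k by (simp add: A_def fps_X_mult_nth)
    then show ?thesis by (simp add: A_def algebra_simps)
  qed
  have R: "(fps_const (complex_of_real lam) * fps_X^2 * C) $ k = complex_of_real lam * C $ (k - 2)"
  proof -
    have "(fps_X^2 * C) $ k = C $ (k - 2)"
      using k by (simp add: fps_X_power_mult_nth)
    then show ?thesis by (simp only: mult.assoc fps_mult_left_const_nth)
  qed
  have ck: "(of_nat k - 1) * a k = complex_of_real lam * C $ (k - 2)"
  proof -
    have "(of_nat k - 1) * a k = (fps_X * fps_deriv A - A) $ k" by (rule L[symmetric])
    also have "\<dots> = (fps_const (complex_of_real lam) * fps_X^2 * C) $ k" by (simp only: E)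
    also have "\<dots> = complex_of_real lam * C $ (k - 2)" by (rule R)
    finally show ?thesis .
  qed
  have Cb: "norm (C $ j) \<le> 1" for j
  proof (rule coeff_le_one[of _ j])
    fix r :: real assume r: "0 < r" "r < 1"
    have "norm ((deriv ^^ j) \<phi> 0) \<le> fact j * 1 / r ^ j"
    proof (rule Cauchy_inequality)
      show "\<phi> holomorphic_on ball 0 r" using r by (intro holomorphic_on_subset[OF hp]) auto
      show "continuous_on (cball 0 r) \<phi>"
        using hp r by (intro holomorphic_on_imp_continuous_on holomorphic_on_subset[OF hp]) auto
      show "norm (0 - x) = r \<Longrightarrow> norm (\<phi> x) \<le> 1" for x using bp r by auto
    qed fact
    then have "norm ((deriv ^^ j) \<phi> 0) / fact j \<le> (fact j * 1 / r ^ j) / fact j"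
      by (rule divide_right_mono) simp
    also have "\<dots> = 1 / r ^ j" by simp
    finally have "norm ((deriv ^^ j) \<phi> 0) / fact j \<le> 1 / r ^ j" .
    moreover have "norm (fps_nth C j) = norm ((deriv ^^ j) \<phi> 0) / fact j"
      using fps_nth_fps_expansion[OF pC, of j] by (simp add: norm_divide)
    ultimately show "norm (fps_nth C j) \<le> 1 / r ^ j" by simp
  qed
  have e: "norm ((of_nat k - 1) * a k) = (real k - 1) * norm (a k)"
  proof -
    have h: "(of_nat k - 1 :: complex) = of_nat (k - 1)" using k by (simp add: of_nat_diff)
    have "norm (of_nat k - 1 :: complex) = real (k - 1)" unfolding h by (rule norm_of_nat)
    also have "real (k - 1) = real k - 1" using k by (simp add: of_nat_diff)
    finally have "norm (of_nat k - 1 :: complex) = real k - 1" .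
    then show ?thesis by (simp only: norm_mult)
  qed
  have "norm ((of_nat k - 1) * a k) \<le> lam"
    using ck Cb[of "k-2"] lam by (simp add: norm_mult)
  then have "(real k - 1) * norm (a k) \<le> lam" by (simp only: e)
  moreover have pk: "real k - 1 > 0" using k by simp
  ultimately show ?thesis by (simp only: pos_le_divide_eq[OF pk] mult.commute)
qed

lemma part1:
  fixes lam :: real and f :: "complex \<Rightarrow> complex" and a :: "nat \<Rightarrow> complex"
  assumes lam: "lam > 0" and hf: "f holomorphic_on ball 0 1" and a0: "a 0 = 0" and a1: "a 1 = 1"
    and s: "\<forall>z\<in>ball 0 1. (\<lambda>k. a k * z ^ k) sums f z"
    and sm: "summable (\<lambda>k. (real (k + 2) - 1) * norm (a (k + 2)))"
    and lt: "(\<Sum>k. (real (k + 2) - 1) * norm (a (k + 2))) < lam"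
  shows "f \<in> Omega lam"
proof -
  define A where "A = Abs_fps a"
  define B where "B = Abs_fps (\<lambda>j. of_nat (j + 1) * a (j + 2))"
  define S where "S = (\<Sum>k. (real (k + 2) - 1) * norm (a (k + 2)))"
  have crA: "fps_conv_radius A \<ge> 1"
    unfolding fps_conv_radius_def A_def fps_nth_Abs_fps
  proof (rule conv_radius_geI_ex')
    fix r :: real assume r: "0 < r" "ereal r < 1"
    then have "complex_of_real r \<in> ball 0 1" by simp
    then show "summable (\<lambda>n. a n * complex_of_real r ^ n)"
      using s sums_summable by blast
  qed
  have Bn: "norm (fps_nth B n * z ^ n) \<le> (real (n + 2) - 1) * norm (a (n + 2))"
    if "norm z \<le> 1" for n z
  proof -
    have "norm (fps_nth B n * z ^ n) = real (n + 1) * norm (a (n + 2)) * norm z ^ n"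
      by (simp only: B_def fps_nth_Abs_fps norm_mult norm_power norm_of_nat)
    also have "\<dots> \<le> real (n + 1) * norm (a (n + 2)) * 1"
      by (intro mult_left_mono power_le_one) (use that in auto)
    finally show ?thesis by simp
  qed
  have crB: "fps_conv_radius B \<ge> 1"
    unfolding fps_conv_radius_def
  proof (rule conv_radius_geI_ex')
    fix r :: real assume r: "0 < r" "ereal r < 1"
    show "summable (\<lambda>n. fps_nth B n * complex_of_real r ^ n)"
      by (rule summable_norm_cancel, rule summable_comparison_test[OF _ sm])
         (use Bn r in auto)
  qed
  have crdA: "fps_conv_radius (fps_deriv A) \<ge> 1"
    using crA fps_conv_radius_deriv[of A] by simp
  have inr: "ereal (norm z) < R" if "z \<in> ball 0 1" "1 \<le> R" for z :: complex and R
    using that by (auto intro: less_le_trans[of _ 1])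
  have feq: "f z = eval_fps A z" if "z \<in> ball 0 1" for z
  proof -
    have "(\<lambda>n. a n * z ^ n) sums eval_fps A z"
      using sums_eval_fps[OF inr[OF that crA]] by (simp add: A_def)
    moreover have "(\<lambda>n. a n * z ^ n) sums f z" using s that by blast
    ultimately show ?thesis using sums_unique2 by metis
  qed
  have dfeq: "deriv f z = eval_fps (fps_deriv A) z" if "z \<in> ball 0 1" for z
  proof (rule DERIV_imp_deriv)
    show "(f has_field_derivative eval_fps (fps_deriv A) z) (at z)"
      by (rule has_field_derivative_transform_within_open[OF has_field_derivative_eval_fps[OF inr[OF that crA]], of "ball 0 1"])
         (use that feq in auto)
  qed
  have fpsid: "fps_X * fps_deriv A - A = fps_X ^ 2 * B"
  proof (rule fps_ext)
    fix n
    show "(fps_X * fps_deriv A - A) $ n = (fps_X ^ 2 * B) $ n"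
    proof (cases "n < 2")
      case True
      then have "n = 0 \<or> n = 1" by auto
      then show ?thesis using a0 a1 by (auto simp: A_def fps_X_power_mult_nth)
    next
      case False
      then obtain m where m: "n = m + 2" by (metis add.commute le_Suc_ex not_less)
      show ?thesis by (simp add: m A_def B_def fps_X_power_mult_nth algebra_simps)
    qed
  qed
  define \<phi> where "\<phi> = (\<lambda>z. eval_fps B z / complex_of_real lam)"
  have hp: "\<phi> holomorphic_on ball 0 1"
    unfolding \<phi>_def
    by (intro holomorphic_intros) (use inr[OF _ crB] lam in auto)
  have bp: "norm (\<phi> z) \<le> 1" if "z \<in> ball 0 1" for z
  proof -
    have "norm (eval_fps B z) \<le> S"
      unfolding eval_fps_def S_def
      by (rule norm_suminf_le[OF _ sm]) (use Bn that in auto)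
    then have "norm (eval_fps B z) \<le> lam" using lt S_def by simp
    then show ?thesis using lam by (simp add: \<phi>_def norm_divide)
  qed
  have eq: "z * deriv f z - f z = complex_of_real lam * z^2 * \<phi> z" if "z \<in> ball 0 1" for z
  proof -
    have c2: "ereal (norm z) < fps_conv_radius (fps_deriv A)" by (rule inr[OF that crdA])
    have c3: "ereal (norm z) < fps_conv_radius A" by (rule inr[OF that crA])
    have c1: "ereal (norm z) < fps_conv_radius (fps_X * fps_deriv A)"
      using fps_conv_radius_mult[of fps_X "fps_deriv A"] c2 by simp
    have "eval_fps (fps_X * fps_deriv A - A) z = eval_fps (fps_X * fps_deriv A) z - eval_fps A z"
      by (rule eval_fps_diff[OF c1 c3])
    also have "eval_fps (fps_X * fps_deriv A) z = z * eval_fps (fps_deriv A) z"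
      using eval_fps_mult[of z fps_X "fps_deriv A"] c2 by simp
    finally have "z * deriv f z - f z = eval_fps (fps_X * fps_deriv A - A) z"
      using that by (simp add: dfeq feq)
    also have "\<dots> = eval_fps (fps_X ^ 2 * B) z" by (simp only: fpsid)
    also have "\<dots> = z ^ 2 * eval_fps B z"
      using inr[OF that crB] by (simp add: eval_fps_mult)
    also have "\<dots> = complex_of_real lam * z^2 * \<phi> z"
      using lam by (simp add: \<phi>_def)
    finally show ?thesis .
  qed
  have f0: "f 0 = 0" using feq[of 0] by (simp add: eval_fps_at_0 A_def a0)
  have d0: "deriv f 0 = 1" using dfeq[of 0] using a1 by (simp add: eval_fps_at_0 A_def)
  show ?thesis unfolding Omega_def using hf f0 d0 hp bp eq by blast
qed

theorem theorem4p6: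
  fixes lam :: real
  assumes "lam > 0"
  shows "(\<forall>(f :: complex \<Rightarrow> complex) (a :: nat \<Rightarrow> complex).
            f holomorphic_on ball 0 1 \<longrightarrow> a 0 = 0 \<longrightarrow> a 1 = 1 \<longrightarrow>
            (\<forall>z\<in>ball 0 1. (\<lambda>k. a k * z ^ k) sums f z) \<longrightarrow>
            summable (\<lambda>k. (real (k + 2) - 1) * norm (a (k + 2))) \<longrightarrow>
            (\<Sum>k. (real (k + 2) - 1) * norm (a (k + 2))) < lam \<longrightarrow>
            f \<in> Omega lam)
       \<and> (\<forall>(f :: complex \<Rightarrow> complex) (a :: nat \<Rightarrow> complex).
            f \<in> Omega lam \<longrightarrow> a 0 = 0 \<longrightarrow> a 1 = 1 \<longrightarrow>
            (\<forall>z\<in>ball 0 1. (\<lambda>k. a k * z ^ k) sums f z) \<longrightarrow>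
            (\<forall>k\<ge>2. norm (a k) \<le> lam / (real k - 1)))"
proof (intro conjI allI impI)
  fix f :: "complex \<Rightarrow> complex" and a :: "nat \<Rightarrow> complex"
  assume "f holomorphic_on ball 0 1" "a 0 = 0" "a 1 = 1"
    "\<forall>z\<in>ball 0 1. (\<lambda>k. a k * z ^ k) sums f z"
    "summable (\<lambda>k. (real (k + 2) - 1) * norm (a (k + 2)))"
    "(\<Sum>k. (real (k + 2) - 1) * norm (a (k + 2))) < lam"
  then show "f \<in> Omega lam" by (rule part1[OF assms])
next
  fix f :: "complex \<Rightarrow> complex" and a :: "nat \<Rightarrow> complex" and k :: nat
  assume "f \<in> Omega lam" "a 0 = 0" "a 1 = 1"
    "\<forall>z\<in>ball 0 1. (\<lambda>k. a k * z ^ k) sums f z" "k \<ge> 2"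
  then show "norm (a k) \<le> lam / (real k - 1)" by (rule part2[OF assms])
qed

end
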